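(* Let $y$ be the solution of the problem $\varepsilon^2 y''(x)=f(x,y)$ on $(0,1)$, $y(0)=y(1)=0$, with $f$ and the Shishkin mesh $\{x_i\}_{i=0}^N$ as described in the context, and let $G$ be the discrete operator defined in the context. Assume that $\varepsilon\leqslant C_0/N$ for some constant $C_0>0$. Then there is a constant $C>0$ independent of $N$ and $\varepsilon$ such that, for the indices $i\in\{N/4,\ldots,N/2-1\}$ with $x_{i-1},x_i,x_{i+1}\in[x_{N/4},1/2]$, $$|(Gy)_i|\leqslant \frac{C}{N^2},$$ where $(Gy)_i$ denotes the $i$-th component of $G$ applied to the vector $(y(x_0),\ldots,y(x_N))^T$.
   Context: Problem: $\varepsilon^2y''(x)=f(x,y)$ on $(0,1)$, $y(0)=y(1)=0$, where $\varepsilon>0$ is a small parameter, $f\in C^k([0,1]\times\mathbb{R})$ for some $k\geq 2$, and $f_y=\partial f/\partial y\geq m>0$ on $[0,1]\times\mathbb{R}$ for a constant $m$; this problem has a unique solution $y$. Shishkin mesh: $N$ is a positive integer divisible by 4, $\lambda=\min\{1/4,\,2\varepsilon\ln N/\sqrt{m}\}$, and it is assumed that $\lambda=2\varepsilon\ln N/\sqrt{m}$. The mesh $0=x_0<x_1<\cdots<x_N=1$ is equidistant on each of $[0,\lambda]$ (with $N/4$ subintervals), $[\lambda,1-\lambda]$ (with $N/2$ subintervals) and $[1-\lambda,1]$ (with $N/4$ subintervals); thus $x_{N/4}=\lambda$, $x_{3N/4}=1-\lambda$, $x_{N/2}=1/2$, subintervals in $[0,\lambda]\cup[1-\lambda,1]$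 have length $4\lambda/N$ and those in $[\lambda,1-\lambda]$ have length $2(1-2\lambda)/N$. Scheme: $\gamma$ is a constant with $\gamma\geq f_y$, and $\beta=\sqrt{\gamma}/\varepsilon$. For $i=1,\ldots,N$ let $\ell_i=x_i-x_{i-1}$, $d_i=\beta/\tanh(\beta\ell_i)$, $a_i=\beta/\sinh(\beta\ell_i)$, $\Delta d_i=d_i-a_i$. For $v=(v_0,\ldots,v_N)^T\in\mathbb{R}^{N+1}$ write $f_j=f(x_j,v_j)$ and define $Gv\in\mathbb{R}^{N+1}$ by $(Gv)_0=v_0$, $(Gv)_N=v_N$ and, for $i=1,\ldots,N-1$, $$(Gv)_i=\frac{\gamma}{\Delta d_i+\Delta d_{i+1}}\Big[(3a_i+d_i+\Delta d_{i+1})(v_{i-1}-v_i)-(3a_{i+1}+d_{i+1}+\Delta d_i)(v_i-v_{i+1})-\frac{f_{i-1}+2f_i+f_{i+1}}{\gamma}(\Delta d_i+\Delta d_{i+1})\Big].$$ *)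

theory Defs
  imports "HOL-Analysis.Analysis"
begin

fun Ck_on :: "nat \<Rightarrow> (real \<times> real) set \<Rightarrow> (real \<times> real \<Rightarrow> real) \<Rightarrow> bool" where
  "Ck_on 0 S g = continuous_on S g"
| "Ck_on (Suc k) S g =
     (\<exists>gx gy. (\<forall>p\<in>S. (g has_derivative (\<lambda>(h1, h2). gx p * h1 + gy p * h2)) (at p within S))
              \<and> Ck_on k S gx \<and> Ck_on k S gy)"

definition shishkin_lambda :: "real \<Rightarrow> real \<Rightarrow> nat \<Rightarrow> real" where
  "shishkin_lambda m \<epsilon> N = min (1/4) (2 * \<epsilon> * ln (real N) / sqrt m)"

text \<open>Shishkin mesh points x_i with transition point lam: N/4 equal steps on [0,lam],
  N/2 on [lam,1-lam], N/4 on [1-lam,1].\<close>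
definition shishkin_mesh :: "real \<Rightarrow> nat \<Rightarrow> nat \<Rightarrow> real" where
  "shishkin_mesh lam N i =
     (if 4 * i \<le> N then 4 * lam * real i / real N
      else if 4 * i \<le> 3 * N then lam + 2 * (1 - 2 * lam) * (real i - real N / 4) / real N
      else 1 - lam + 4 * lam * (real i - 3 * real N / 4) / real N)"

definition mesh_len :: "(nat \<Rightarrow> real) \<Rightarrow> nat \<Rightarrow> real" where
  "mesh_len x i = x i - x (i - 1)"

definition coef_d :: "(nat \<Rightarrow> real) \<Rightarrow> real \<Rightarrow> nat \<Rightarrow> real" where
  "coef_d x \<beta> i = \<beta> / tanh (\<beta> * mesh_len x i)"

definition coef_a :: "(nat \<Rightarrow> real) \<Rightarrow> real \<Rightarrow> nat \<Rightarrow> real" where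
  "coef_a x \<beta> i = \<beta> / sinh (\<beta> * mesh_len x i)"

definition coef_Dd :: "(nat \<Rightarrow> real) \<Rightarrow> real \<Rightarrow> nat \<Rightarrow> real" where
  "coef_Dd x \<beta> i = coef_d x \<beta> i - coef_a x \<beta> i"

definition G_op :: "(nat \<Rightarrow> real) \<Rightarrow> nat \<Rightarrow> real \<Rightarrow> real \<Rightarrow> (real \<Rightarrow> real \<Rightarrow> real)
                     \<Rightarrow> (nat \<Rightarrow> real) \<Rightarrow> nat \<Rightarrow> real" where
  "G_op x N \<epsilon> \<gamma> f v i =
     (let \<beta> = sqrt \<gamma> / \<epsilon>;
          d = coef_d x \<beta>; a = coef_a x \<beta>; Dd = coef_Dd x \<beta>;
          fv = (\<lambda>j. f (x j) (v j))
      in if i = 0 then v 0 else if i = N then v N else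
         \<gamma> / (Dd i + Dd (i + 1)) *
           ((3 * a i + d i + Dd (i + 1)) * (v (i - 1) - v i)
            - (3 * a (i + 1) + d (i + 1) + Dd i) * (v i - v (i + 1))
            - (fv (i - 1) + 2 * fv i + fv (i + 1)) / \<gamma> * (Dd i + Dd (i + 1))))"

end

theory Submission
  imports Defs
begin

lemma Ck_cont: assumes ck: "Ck_on k S g" shows "continuous_on S g"
proof (cases k)
  case 0 then show ?thesis using ck by simp
next
  case (Suc j)
  then obtain gx gy where d: "\<forall>p\<in>S. (g has_derivative (\<lambda>(h1, h2). gx p * h1 + gy p * h2)) (at p within S)"
    using ck Suc by auto
  show ?thesis unfolding continuous_on_eq_continuous_within
    using d has_derivative_continuous by blast
qed

lemma Ck_mono: "Ck_on (Suc k) S g \<Longrightarrow> Ck_on k S g"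
proof (induction k arbitrary: g)
  case 0 then have "continuous_on S g" by (rule Ck_cont) then show ?case by simp
next
  case (Suc k)
  from Suc.prems obtain gx gy where d: "\<forall>p\<in>S. (g has_derivative (\<lambda>(h1, h2). gx p * h1 + gy p * h2)) (at p within S)"
    and c1: "Ck_on (Suc k) S gx" and c2: "Ck_on (Suc k) S gy" by (simp only: Ck_on.simps(2)) blast
  have "Ck_on k S gx" "Ck_on k S gy" using Suc.IH c1 c2 by blast+
  then show ?case unfolding Ck_on.simps(2) using d by blast
qed
lemma Ck_le: "Ck_on k S g \<Longrightarrow> j \<le> k \<Longrightarrow> Ck_on j S g"
proof (induction k)
  case 0 then show ?case by simp
next
  case (Suc k) 
  show ?case
  proof (cases "j = Suc k")
    case True then show ?thesis using Suc.prems by simp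
  next
    case False then have "j \<le> k" using Suc.prems by simp
    moreover have "Ck_on k S g" using Ck_mono Suc.prems by blast
    ultimately show ?thesis using Suc.IH by blast
  qed
qed

lemma Ck2:
  assumes "Ck_on 2 S g"
  obtains gx gy gxx gxy gyx gyy where
    "\<forall>p\<in>S. (g has_derivative (\<lambda>(h1, h2). gx p * h1 + gy p * h2)) (at p within S)"
    "\<forall>p\<in>S. (gx has_derivative (\<lambda>(h1, h2). gxx p * h1 + gxy p * h2)) (at p within S)"
    "\<forall>p\<in>S. (gy has_derivative (\<lambda>(h1, h2). gyx p * h1 + gyy p * h2)) (at p within S)"
    "continuous_on S gxx" "continuous_on S gxy" "continuous_on S gyx" "continuous_on S gyy"
proof -
  from assms have "Ck_on (Suc (Suc 0)) S g" by (simp only: numeral_2_eq_2)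
  then obtain gx gy where d: "\<forall>p\<in>S. (g has_derivative (\<lambda>(h1, h2). gx p * h1 + gy p * h2)) (at p within S)"
    and c1: "Ck_on (Suc 0) S gx" and c2: "Ck_on (Suc 0) S gy" unfolding Ck_on.simps(2) by blast
  from c1 obtain gxx gxy where d1:
    "\<forall>p\<in>S. (gx has_derivative (\<lambda>(h1, h2). gxx p * h1 + gxy p * h2)) (at p within S)"
    and e1: "Ck_on 0 S gxx" and e2: "Ck_on 0 S gxy" unfolding Ck_on.simps(2) by blast
  from c2 obtain gyx gyy where d2:
    "\<forall>p\<in>S. (gy has_derivative (\<lambda>(h1, h2). gyx p * h1 + gyy p * h2)) (at p within S)"
    and e3: "Ck_on 0 S gyx" and e4: "Ck_on 0 S gyy" unfolding Ck_on.simps(2) by blast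
  show thesis
    by (rule that[OF d d1 d2 e1[unfolded Ck_on.simps] e2[unfolded Ck_on.simps] e3[unfolded Ck_on.simps] e4[unfolded Ck_on.simps]])
qed

lemma G_alg0:
  fixes X S \<gamma> p q r fs :: real
  assumes "X > 0" "\<gamma> > 0"
  shows "\<gamma> / (X + X) * (S * (p - q) - S * (q - r) - fs / \<gamma> * (X + X)) = \<gamma> * S / (X + X) * (p - 2 * q + r) - fs"
proof -
  have a: "\<gamma> / (X + X) * (fs / \<gamma> * (X + X)) = fs" using assms by simp
  have b: "c * (S * (p - q) - S * (q - r)) = c * S * (p - 2 * q + r)" for c
    by (simp add: algebra_simps)
  have c: "\<gamma> * S / (X + X) = \<gamma> / (X + X) * S" by simp
  show ?thesis unfolding c right_diff_distrib[of "\<gamma> / (X + X)" "S * (p - q) - S * (q - r)"] a b ..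
qed
lemma exp_ln2: "N > 0 \<Longrightarrow> exp (- (2 * ln (real N))) = 1 / (real N)\<^sup>2"
proof -
  assume N: "N > 0"
  have "2 * ln (real N) = ln ((real N)^2)" using N by (simp add: ln_realpow)
  then show ?thesis using N by (simp add: exp_minus inverse_eq_divide)
qed
lemma G_alg:
  fixes \<beta> \<sigma> \<gamma> p q r fs :: real
  assumes "\<beta> > 0" "\<sigma> > 0" "\<gamma> > 0"
  shows "\<gamma> / ((\<beta> / tanh \<sigma> - \<beta> / sinh \<sigma>) + (\<beta> / tanh \<sigma> - \<beta> / sinh \<sigma>)) *
     ((3 * (\<beta> / sinh \<sigma>) + \<beta> / tanh \<sigma> + (\<beta> / tanh \<sigma> - \<beta> / sinh \<sigma>)) * (p - q)
      - (3 * (\<beta> / sinh \<sigma>) + \<beta> / tanh \<sigma> + (\<beta> / tanh \<sigma> - \<beta> / sinh \<sigma>)) * (q - r)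
      - fs / \<gamma> * ((\<beta> / tanh \<sigma> - \<beta> / sinh \<sigma>) + (\<beta> / tanh \<sigma> - \<beta> / sinh \<sigma>)))
   = \<gamma> * ((1 + cosh \<sigma>) / (cosh \<sigma> - 1)) * (p - 2 * q + r) - fs"
proof -
  have sh: "sinh \<sigma> > 0" using assms by simp
  have ch: "cosh \<sigma> > 1" using assms cosh_real_ge_1[of \<sigma>] cosh_real_one_iff[of \<sigma>] by linarith
  have t: "\<beta> / tanh \<sigma> = \<beta> * cosh \<sigma> / sinh \<sigma>" by (simp add: tanh_def)
  have Dd: "\<beta> / tanh \<sigma> - \<beta> / sinh \<sigma> = \<beta> * (cosh \<sigma> - 1) / sinh \<sigma>"
    unfolding t by (simp add: diff_divide_distrib right_diff_distrib)
  have S: "3 * (\<beta> / sinh \<sigma>) + \<beta> / tanh \<sigma> + (\<beta> / tanh \<sigma> - \<beta> / sinh \<sigma>) = 2 * \<beta> * (1 + cosh \<sigma>) / sinh \<sigma>"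
    unfolding t by (simp add: add_divide_distrib diff_divide_distrib algebra_simps)
  have X: "\<beta> * (cosh \<sigma> - 1) / sinh \<sigma> > 0" using sh ch assms by simp
  have Q: "\<gamma> * (2 * \<beta> * (1 + cosh \<sigma>) / sinh \<sigma>) / (\<beta> * (cosh \<sigma> - 1) / sinh \<sigma> + \<beta> * (cosh \<sigma> - 1) / sinh \<sigma>)
     = \<gamma> * ((1 + cosh \<sigma>) / (cosh \<sigma> - 1))"
  proof -
    have "\<beta> * (cosh \<sigma> - 1) / sinh \<sigma> + \<beta> * (cosh \<sigma> - 1) / sinh \<sigma> = 2 * \<beta> * (cosh \<sigma> - 1) / sinh \<sigma>" by simp
    then show ?thesis using sh ch assms by simp
  qed
  show ?thesis unfolding S unfolding Dd unfolding G_alg0[OF X assms(3)] Q ..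
qed

lemma abs4: fixes a b c a0 b0 c0 :: real
  shows "\<bar>a - 2*b + c\<bar> \<le> \<bar>a0 - 2*b0 + c0\<bar> + \<bar>a - a0\<bar> + 2*\<bar>b - b0\<bar> + \<bar>c - c0\<bar>"
  by (simp add: abs_if; smt (verit))
lemma abs3: fixes a b c :: real
  shows "\<bar>a + 2*b + c\<bar> \<le> \<bar>a\<bar> + 2*\<bar>b\<bar> + \<bar>c\<bar>"
  by arith
lemma absG: fixes g Q d s :: real
  assumes "g \<ge> 0" "Q \<ge> 0"
  shows "\<bar>g * Q * d - s\<bar> \<le> g * Q * \<bar>d\<bar> + \<bar>s\<bar>"
proof -
  have "\<bar>g * Q * d\<bar> = g * Q * \<bar>d\<bar>" using assms by (simp add: abs_mult)
  then show ?thesis by arith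
qed

lemma max2:
  fixes w w1 :: "real \<Rightarrow> real"
  assumes ax: "a < x" and xb: "x < b"
    and dw: "\<And>t. t \<in> {a<..<b} \<Longrightarrow> (w has_real_derivative w1 t) (at t)"
    and dw1: "(w1 has_real_derivative w2) (at x)"
    and mx: "\<And>t. t \<in> {a<..<b} \<Longrightarrow> w t \<le> w x"
  shows "w2 \<le> 0"
proof (rule ccontr)
  assume "\<not> w2 \<le> 0" then have w2: "w2 > 0" by simp
  have "w1 x = 0"
  proof (rule DERIV_local_max[OF dw[of x]])
    show "x \<in> {a<..<b}" using ax xb by simp
    show "0 < min (x - a) (b - x)" using ax xb by simp
    show "\<forall>y. \<bar>x - y\<bar> < min (x - a) (b - x) \<longrightarrow> w y \<le> w x"
      using mx by (auto simp: abs_if split: if_splits)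
  qed
  obtain d where d: "d > 0" "\<And>h. h > 0 \<Longrightarrow> h < d \<Longrightarrow> w1 x < w1 (x + h)"
    using DERIV_pos_inc_right[OF dw1 w2] by blast
  define h where "h = min (d / 2) ((b - x) / 2)"
  have "h \<le> (b - x) / 2" unfolding h_def by (rule min.cobounded2)
  then have h: "h > 0" "h < d" "x + h < b" using d xb by (auto simp: h_def)
  have "\<And>t. x \<le> t \<Longrightarrow> t \<le> x + h \<Longrightarrow> (w has_real_derivative w1 t) (at t)"
    using dw ax h by auto
  then obtain z where z: "x < z" "z < x + h" "w (x + h) - w x = (x + h - x) * w1 z"
    using MVT2[of x "x + h" w w1] h by auto
  have "w1 x < w1 (x + (z - x))" using d(2)[of "z - x"] z h by auto
  then have "w1 z > 0" using \<open>w1 x = 0\<close> by simp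
  then have "h * w1 z > 0" using h(1) by simp
  then have "w (x + h) > w x" using z(3) by simp
  moreover have "w (x + h) \<le> w x" using mx[of "x + h"] ax h by auto
  ultimately show False by simp
qed

locale setting =
  fixes f :: "real \<Rightarrow> real \<Rightarrow> real" and fy :: "real \<Rightarrow> real \<Rightarrow> real" and m \<gamma> :: real
    and gx gy gxx gxy gyx gyy :: "real \<times> real \<Rightarrow> real"
  assumes dF: "\<And>p. p \<in> {0..1} \<times> UNIV \<Longrightarrow> ((\<lambda>p. f (fst p) (snd p)) has_derivative (\<lambda>(h1, h2). gx p * h1 + gy p * h2)) (at p within {0..1} \<times> UNIV)"
    and dgx: "\<And>p. p \<in> {0..1} \<times> UNIV \<Longrightarrow> (gx has_derivative (\<lambda>(h1, h2). gxx p * h1 + gxy p * h2)) (at p within {0..1} \<times> UNIV)"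
    and dgy: "\<And>p. p \<in> {0..1} \<times> UNIV \<Longrightarrow> (gy has_derivative (\<lambda>(h1, h2). gyx p * h1 + gyy p * h2)) (at p within {0..1} \<times> UNIV)"
    and cgxx: "continuous_on ({0..1} \<times> UNIV) gxx" and cgxy: "continuous_on ({0..1} \<times> UNIV) gxy"
    and cgyx: "continuous_on ({0..1} \<times> UNIV) gyx" and cgyy: "continuous_on ({0..1} \<times> UNIV) gyy"
    and fy: "\<And>x v. x \<in> {0..1} \<Longrightarrow> ((\<lambda>w. f x w) has_real_derivative fy x v) (at v)"
    and m: "m > 0" and fy_ge: "\<And>x v. x \<in> {0..1} \<Longrightarrow> fy x v \<ge> m"
    and gamma: "\<And>x v. x \<in> {0..1} \<Longrightarrow> \<gamma> \<ge> fy x v"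
begin

lemma gamma_pos: "\<gamma> > 0"
  using m fy_ge[of 0 0] gamma[of 0 0] by simp

lemma mono1:
  assumes x: "x \<in> {0..1}" and uv: "u \<le> v"
  shows "m * (v - u) \<le> f x v - f x u \<and> f x v - f x u \<le> \<gamma> * (v - u)"
proof (cases "u = v")
  case True then show ?thesis by simp
next
  case False
  with uv have "u < v" by simp
  from MVT2[OF this, of "\<lambda>w. f x w" "fy x"] fy[OF x]
  obtain z where z: "u < z" "z < v" "f x v - f x u = (v - u) * fy x z" by blast
  have "m * (v - u) \<le> fy x z * (v - u)" using fy_ge[OF x, of z] uv by (intro mult_right_mono) auto
  moreover have "fy x z * (v - u) \<le> \<gamma> * (v - u)" using gamma[OF x, of z] uv by (intro mult_right_mono) auto
  ultimately show ?thesis using z(3) by (simp add: mult.commute)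
qed

lemma mono_abs:
  assumes x: "x \<in> {0..1}"
  shows "m * \<bar>v - u\<bar> \<le> \<bar>f x v - f x u\<bar>" "\<bar>f x v - f x u\<bar> \<le> \<gamma> * \<bar>v - u\<bar>"
proof -
  have "m * \<bar>v - u\<bar> \<le> \<bar>f x v - f x u\<bar> \<and> \<bar>f x v - f x u\<bar> \<le> \<gamma> * \<bar>v - u\<bar>"
  proof (cases "u \<le> v")
    case True
    have "0 \<le> f x v - f x u" using mono1[OF x True] m True by (smt (verit) mult_nonneg_nonneg)
    then show ?thesis using mono1[OF x True] m True by auto
  next
    case False then have vu: "v \<le> u" by simp
    have "0 \<le> f x u - f x v" using mono1[OF x vu] m vu by (smt (verit) mult_nonneg_nonneg)
    then show ?thesis using mono1[OF x vu] m vu by (auto simp: abs_minus_commute)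
  qed
  then show "m * \<bar>v - u\<bar> \<le> \<bar>f x v - f x u\<bar>" "\<bar>f x v - f x u\<bar> \<le> \<gamma> * \<bar>v - u\<bar>" by auto
qed

lemma cont_f: "x \<in> {0..1} \<Longrightarrow> continuous_on A (\<lambda>w. f x w)"
  using fy by (meson DERIV_isCont continuous_at_imp_continuous_on)

lemma root_ex1: assumes x: "x \<in> {0..1}" shows "\<exists>!v. f x v = 0"
proof (rule ex_ex1I)
  define a where "a = f x 0"
  show "\<exists>v. f x v = 0"
  proof (cases "a \<le> 0")
    case True
    have le: "0 \<le> -a/m" using True m by (simp add: divide_nonpos_pos)
    have "f x (-a/m) - f x 0 \<ge> m * (-a/m - 0)" using mono1[OF x le] by blast
    then have "0 \<le> f x (-a/m)" using m by (simp add: a_def)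
    from IVT'[of "\<lambda>w. f x w" 0 0 "-a/m", OF _ this le cont_f[OF x]]
    show ?thesis using True by (auto simp: a_def)
  next
    case False
    have le: "-a/m \<le> 0" using False m by simp
    have "f x 0 - f x (-a/m) \<ge> m * (0 - (-a/m))" using mono1[OF x le] by blast
    then have "f x (-a/m) \<le> 0" using m by (simp add: a_def)
    from IVT'[of "\<lambda>w. f x w" "-a/m" 0 0, OF this _ le cont_f[OF x]]
    show ?thesis using False by (auto simp: a_def)
  qed
next
  fix u v assume "f x u = 0" "f x v = 0"
  with mono_abs(1)[OF x, of v u] m have "m * \<bar>v - u\<bar> \<le> 0" by simp
  with m show "u = v" by (smt (verit) mult_pos_pos)
qed

definition y0 :: "real \<Rightarrow> real" where "y0 x = (THE v. f x v = 0)"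

lemma y0_root: "x \<in> {0..1} \<Longrightarrow> f x (y0 x) = 0"
  unfolding y0_def using root_ex1 by (rule theI')

lemma gy_eq: assumes x: "x \<in> {0..1}" shows "gy (x, v) = fy x v"
proof -
  have k: "((\<lambda>w. (x, w)) has_derivative (\<lambda>h. (0, h))) (at v)"
    by (intro derivative_eq_intros) auto
  have "((\<lambda>p. f (fst p) (snd p)) has_derivative (\<lambda>(h1, h2). gx (x,v) * h1 + gy (x,v) * h2)) (at ((\<lambda>w. (x, w)) v) within range (\<lambda>w. (x, w)))"
    using dF[of "(x,v)"] x by (auto intro: has_derivative_subset)
  from diff_chain_within[OF k this]
  have "((\<lambda>w. f x w) has_derivative (\<lambda>h. gy (x,v) * h)) (at v)"
    by (simp add: o_def)
  then have "((\<lambda>w. f x w) has_real_derivative gy (x,v)) (at v)"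
    by (simp add: has_field_derivative_def)
  then show ?thesis using fy[OF x] DERIV_unique by blast
qed

lemma gy_ge: "p \<in> {0..1} \<times> UNIV \<Longrightarrow> gy p \<ge> m"
  using gy_eq fy_ge by (cases p) auto

abbreviation "SS \<equiv> {0..1::real} \<times> (UNIV::real set)"

lemma cont_F: "continuous_on SS (\<lambda>p. f (fst p) (snd p))"
  unfolding continuous_on_eq_continuous_within using has_derivative_continuous[OF dF] by blast
lemma cont_gx: "continuous_on SS gx"
  unfolding continuous_on_eq_continuous_within using has_derivative_continuous[OF dgx] by blast
lemma cont_gy: "continuous_on SS gy"
  unfolding continuous_on_eq_continuous_within using has_derivative_continuous[OF dgy] by blast

lemma y0_cont: "continuous_on {0..1} y0"
  unfolding continuous_on_iff
proof (intro ballI allI impI)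
  fix x e :: real assume x: "x \<in> {0..1}" and e: "0 < e"
  have "continuous_on {0..1} (\<lambda>x'. (\<lambda>p. f (fst p) (snd p)) (x', y0 x))"
    by (rule continuous_on_compose2[OF cont_F]) (auto intro!: continuous_intros)
  then have "continuous_on {0..1} (\<lambda>x'. f x' (y0 x))" by simp
  then obtain d where d: "d > 0" "\<forall>x'\<in>{0..1}. dist x' x < d \<longrightarrow> dist (f x' (y0 x)) (f x (y0 x)) < m * e"
    using x e m unfolding continuous_on_iff by (metis mult_pos_pos)
  show "\<exists>d>0. \<forall>x'\<in>{0..1}. dist x' x < d \<longrightarrow> dist (y0 x') (y0 x) < e"
  proof (intro exI conjI ballI impI)
    fix x' assume x': "x' \<in> {0..1}" "dist x' x < d"
    have "m * \<bar>y0 x' - y0 x\<bar> \<le> \<bar>f x' (y0 x') - f x' (y0 x)\<bar>" by (rule mono_abs(1)[OF x'(1)])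
    also have "\<dots> = dist (f x' (y0 x)) (f x (y0 x))" using y0_root[OF x] y0_root[OF x'(1)] by (simp add: dist_real_def)
    also have "\<dots> < m * e" using d x' by blast
    finally show "dist (y0 x') (y0 x) < e" using m by (simp add: dist_real_def)
  qed (use d in auto)
qed

abbreviation "TT \<equiv> {0<..<1::real} \<times> (UNIV::real set)"

lemma TT_open: "open TT" by (intro open_Times) auto
lemma TT_sub: "TT \<subseteq> SS" by auto
lemma at_TT: "q \<in> TT \<Longrightarrow> at q within SS = at q"
  using at_within_open_subset[OF _ TT_open TT_sub] by blast

lemma dF_at: "q \<in> TT \<Longrightarrow> ((\<lambda>p. f (fst p) (snd p)) has_derivative (\<lambda>(h1, h2). gx q * h1 + gy q * h2)) (at q)"
  using dF[of q] at_TT[of q] TT_sub by auto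
lemma dgx_at: "q \<in> TT \<Longrightarrow> (gx has_derivative (\<lambda>(h1, h2). gxx q * h1 + gxy q * h2)) (at q)"
  using dgx[of q] at_TT[of q] TT_sub by auto
lemma dgy_at: "q \<in> TT \<Longrightarrow> (gy has_derivative (\<lambda>(h1, h2). gyx q * h1 + gyy q * h2)) (at q)"
  using dgy[of q] at_TT[of q] TT_sub by auto

lemma conv01:
  fixes x x' t :: real
  assumes "0 < x" "x < 1" "0 < x'" "x' < 1" "0 \<le> t" "t \<le> 1"
  shows "0 < x + t * (x' - x) \<and> x + t * (x' - x) < 1"
proof (cases "x \<le> x'")
  case True
  have "0 \<le> t * (x' - x)" "t * (x' - x) \<le> 1 * (x' - x)" using assms True mult_right_mono[of t 1 "x'-x"]
    by auto
  then show ?thesis using assms by auto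
next
  case False
  have "t * (x' - x) \<le> 0" "1 * (x' - x) \<le> t * (x' - x)" using assms False
    by (auto intro: mult_right_mono_neg mult_nonneg_nonpos)
  then show ?thesis using assms by auto
qed

lemma y0_mvt:
  assumes x: "x \<in> {0<..<1}" and x': "x' \<in> {0<..<1}"
  shows "\<exists>r. r \<in> TT \<and> dist r (x, y0 x) \<le> dist (x', y0 x') (x, y0 x) \<and>
              gx r * (x' - x) + gy r * (y0 x' - y0 x) = 0"
proof -
  define p where "p = (x, y0 x)"
  define q where "q = (x', y0 x')"
  define l where "l = (\<lambda>t::real. p + t *\<^sub>R (q - p))"
  have lT: "l t \<in> TT" if "0 \<le> t" "t \<le> 1" for t
    using conv01[of x x' t] x x' that by (simp add: l_def p_def q_def)
  have dl: "(l has_derivative (\<lambda>h. h *\<^sub>R (q - p))) (at t)" for t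
    unfolding l_def by (intro derivative_eq_intros) auto
  define F where "F = (\<lambda>p::real\<times>real. f (fst p) (snd p))"
  define L where "L = (\<lambda>r::real\<times>real. \<lambda>(h1::real, h2::real). gx r * h1 + gy r * h2)"
  have dphi: "((F \<circ> l) has_derivative (L (l t) \<circ> (\<lambda>h. h *\<^sub>R (q - p)))) (at t)"
    if "0 \<le> t" "t \<le> 1" for t
    using diff_chain_at[OF dl dF_at[OF lT[OF that]]] unfolding F_def L_def .
  have cont: "continuous_on {0..1} (F \<circ> l)"
    using dphi has_derivative_continuous continuous_at_imp_continuous_on
    by (metis atLeastAtMost_iff continuous_at_imp_continuous_on)
  obtain \<xi> where xi: "0 < \<xi>" "\<xi> < 1" "(F \<circ> l) 1 - (F \<circ> l) 0 = (L (l \<xi>) \<circ> (\<lambda>h. h *\<^sub>R (q - p))) (1 - 0)"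
    using mvt[of 0 1 "F \<circ> l" "\<lambda>t. L (l t) \<circ> (\<lambda>h. h *\<^sub>R (q - p))", OF _ cont] dphi by auto
  have F0: "(F \<circ> l) 0 = 0" "(F \<circ> l) 1 = 0"
    using y0_root[of x] y0_root[of x'] x x' by (auto simp: F_def l_def p_def q_def)
  have eq: "gx (l \<xi>) * (x' - x) + gy (l \<xi>) * (y0 x' - y0 x) = 0"
    using xi(3) F0 by (simp add: L_def p_def q_def)
  have "dist (l \<xi>) p = \<xi> * dist q p"
    by (simp add: l_def dist_norm norm_minus_commute xi(1) less_imp_le)
  also have "\<dots> \<le> dist q p" using xi by (simp add: mult_left_le_one_le)
  finally show ?thesis using eq lT[of \<xi>] xi unfolding p_def q_def by (intro exI[of _ "l \<xi>"]) auto
qed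

definition R :: "real \<times> real \<Rightarrow> real" where "R q = - (gx q / gy q)"

lemma gy_nz: "q \<in> SS \<Longrightarrow> gy q \<noteq> 0"
  using gy_ge[of q] m by auto

lemma cont_R: "continuous_on SS R"
  unfolding R_def by (intro continuous_on_minus continuous_on_divide cont_gx cont_gy) (use gy_nz in auto)

lemma int_SS: "x \<in> {0<..<1} \<Longrightarrow> (x, v) \<in> interior SS"
  by (simp add: interior_Times)

lemma y0_isCont: "x \<in> {0<..<1} \<Longrightarrow> continuous (at x) (\<lambda>x. (x, y0 x))"
  by (rule continuous_on_interior[of "{0..1}"]) (auto intro!: continuous_intros y0_cont)

lemma y0_deriv:
  assumes x: "x \<in> {0<..<1}"
  shows "(y0 has_real_derivative R (x, y0 x)) (at x)"
  unfolding has_field_derivative_iff LIM_eq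
proof (intro allI impI)
  fix e :: real assume e: "0 < e"
  have "continuous (at (x, y0 x)) R"
    by (rule continuous_on_interior[OF cont_R int_SS[OF x]])
  then obtain d1 where d1: "d1 > 0" "\<And>r. dist r (x, y0 x) < d1 \<Longrightarrow> dist (R r) (R (x, y0 x)) < e"
    unfolding continuous_at_eps_delta using e by blast
  obtain d2 where d2: "d2 > 0" "\<And>x'. dist x' x < d2 \<Longrightarrow> dist (x', y0 x') (x, y0 x) < d1"
    using y0_isCont[OF x] d1(1) unfolding continuous_at_eps_delta by blast
  define s where "s = min d2 (min x (1 - x))"
  have s: "s > 0" using d2 x by (simp add: s_def)
  show "\<exists>s>0. \<forall>x'. x' \<noteq> x \<and> norm (x' - x) < s \<longrightarrow> norm ((y0 x' - y0 x) / (x' - x) - R (x, y0 x)) < e"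
  proof (intro exI[of _ s] conjI allI impI s)
    fix x' assume a: "x' \<noteq> x \<and> norm (x' - x) < s"
    then have x': "x' \<in> {0<..<1}" using x by (auto simp: s_def)
    have dx: "dist x' x < d2" using a by (simp add: s_def dist_norm)
    obtain r where r: "r \<in> TT" "dist r (x, y0 x) \<le> dist (x', y0 x') (x, y0 x)"
      "gx r * (x' - x) + gy r * (y0 x' - y0 x) = 0"
      using y0_mvt[OF x x'] by blast
    have "gy r \<noteq> 0" using gy_nz r(1) by auto
    then have "(y0 x' - y0 x) / (x' - x) = R r" using r(3) a
      by (simp add: R_def field_simps)
    moreover have "dist r (x, y0 x) < d1" using r(2) d2(2)[OF dx] by linarith
    ultimately show "norm ((y0 x' - y0 x) / (x' - x) - R (x, y0 x)) < e"
      using d1(2) by (simp add: dist_norm)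
  qed
qed

definition D1 :: "real \<Rightarrow> real" where "D1 x = R (x, y0 x)"
definition E :: "real \<times> real \<Rightarrow> real" where
  "E q = - (((gxx q + gxy q * R q) * gy q - gx q * (gyx q + gyy q * R q)) / (gy q * gy q))"

lemma comp_deriv:
  assumes x: "x \<in> {0<..<1}"
    and dg: "(g has_derivative (\<lambda>(h1, h2). gA (x, y0 x) * h1 + gB (x, y0 x) * h2)) (at (x, y0 x))"
  shows "((\<lambda>x. g (x, y0 x)) has_real_derivative (gA (x, y0 x) + gB (x, y0 x) * R (x, y0 x))) (at x)"
proof -
  have dc: "((\<lambda>x. (x, y0 x)) has_derivative (\<lambda>h. (h, R (x, y0 x) * h))) (at x)"
    by (rule has_derivative_Pair[OF has_derivative_ident y0_deriv[OF x, unfolded has_field_derivative_def]])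
  from diff_chain_at[OF dc dg]
  have "((\<lambda>x. g (x, y0 x)) has_derivative (\<lambda>h. gA (x, y0 x) * h + gB (x, y0 x) * (R (x, y0 x) * h))) (at x)"
    by (simp add: o_def)
  moreover have "(\<lambda>h. gA (x, y0 x) * h + gB (x, y0 x) * (R (x, y0 x) * h)) = (*) (gA (x, y0 x) + gB (x, y0 x) * R (x, y0 x))"
    by (rule ext) (simp add: algebra_simps)
  ultimately show ?thesis by (simp add: has_field_derivative_def)
qed

lemma D1_deriv:
  assumes x: "x \<in> {0<..<1}"
  shows "(D1 has_real_derivative E (x, y0 x)) (at x)"
proof -
  have q: "(x, y0 x) \<in> TT" using x by auto
  have a: "((\<lambda>x. gx (x, y0 x)) has_real_derivative (gxx (x, y0 x) + gxy (x, y0 x) * R (x, y0 x))) (at x)"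
    by (rule comp_deriv[where g=gx and gA=gxx and gB=gxy, OF x dgx_at[OF q]])
  have b: "((\<lambda>x. gy (x, y0 x)) has_real_derivative (gyx (x, y0 x) + gyy (x, y0 x) * R (x, y0 x))) (at x)"
    by (rule comp_deriv[where g=gy and gA=gyx and gB=gyy, OF x dgy_at[OF q]])
  have nz: "gy (x, y0 x) \<noteq> 0" using gy_nz q by auto
  from DERIV_minus[OF DERIV_divide[OF a b nz]]
  show ?thesis unfolding D1_def E_def R_def by simp
qed

lemma cont_E: "continuous_on SS E"
  unfolding E_def
  by (intro continuous_on_minus continuous_on_divide continuous_on_mult continuous_on_add continuous_on_diff
      cont_gx cont_gy cgxx cgxy cgyx cgyy cont_R) (use gy_nz in auto)

lemma E_bound: "\<exists>K>0. \<forall>x\<in>{0..1}. \<bar>E (x, y0 x)\<bar> \<le> K"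
proof -
  have "continuous_on {0..1} (\<lambda>x. E (x, y0 x))"
    by (rule continuous_on_compose2[OF cont_E]) (auto intro!: continuous_intros y0_cont)
  then have "bounded ((\<lambda>x. E (x, y0 x)) ` {0..1})"
    by (intro compact_imp_bounded compact_continuous_image) auto
  then show ?thesis unfolding bounded_pos by auto
qed

lemma y0_deriv': "x \<in> {0<..<1} \<Longrightarrow> (y0 has_real_derivative D1 x) (at x)"
  using y0_deriv by (simp add: D1_def)

lemma sec_diff:
  assumes K: "\<forall>x\<in>{0..1}. \<bar>E (x, y0 x)\<bar> \<le> K" and h: "0 < h" and a1: "0 < a - h" and a2: "a + h < 1"
  shows "\<bar>y0 (a - h) - 2 * y0 a + y0 (a + h)\<bar> \<le> 2 * K * h\<^sup>2"
proof -
  define \<psi> where "\<psi> = (\<lambda>s. y0 (a + s) + y0 (a - s))"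
  have d\<psi>: "(\<psi> has_real_derivative (D1 (a + s) - D1 (a - s))) (at s)" if "0 \<le> s" "s \<le> h" for s
  proof -
    have i1: "a + s \<in> {0<..<1}" "a - s \<in> {0<..<1}" using that a1 a2 by auto
    have d1: "((\<lambda>s. y0 (a + s)) has_real_derivative D1 (a + s) * 1) (at s)"
      by (rule DERIV_chain2[where g="\<lambda>s. a + s" and x=s, OF y0_deriv'[OF i1(1)]]) (auto intro!: derivative_eq_intros)
    have d2: "((\<lambda>s. y0 (a - s)) has_real_derivative D1 (a - s) * (-1)) (at s)"
      by (rule DERIV_chain2[where g="\<lambda>s. a - s" and x=s, OF y0_deriv'[OF i1(2)]]) (auto intro!: derivative_eq_intros)
    show ?thesis unfolding \<psi>_def using DERIV_add[OF d1 d2] by simp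
  qed
  obtain s1 where s1: "0 < s1" "s1 < h" "\<psi> h - \<psi> 0 = (h - 0) * (D1 (a + s1) - D1 (a - s1))"
    using MVT2[OF h, of \<psi> "\<lambda>s. D1 (a + s) - D1 (a - s)"] d\<psi> by auto
  have "a - s1 < a + s1" using s1 by simp
  moreover have "\<And>t. a - s1 \<le> t \<Longrightarrow> t \<le> a + s1 \<Longrightarrow> (D1 has_real_derivative E (t, y0 t)) (at t)"
  proof -
    fix t assume "a - s1 \<le> t" "t \<le> a + s1"
    then have "t \<in> {0<..<1}" using s1 a1 a2 by auto
    then show "(D1 has_real_derivative E (t, y0 t)) (at t)" by (rule D1_deriv)
  qed
  ultimately obtain z where z: "a - s1 < z" "z < a + s1" "D1 (a + s1) - D1 (a - s1) = (a + s1 - (a - s1)) * E (z, y0 z)"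
    using MVT2[of "a - s1" "a + s1" D1 "\<lambda>z. E (z, y0 z)"] by blast
  have zz: "z \<in> {0..1}" using z s1 a1 a2 by auto
  have "\<bar>\<psi> h - \<psi> 0\<bar> = h * (2 * s1) * \<bar>E (z, y0 z)\<bar>"
    using s1 z h by (simp add: abs_mult)
  also have "\<dots> \<le> h * (2 * h) * K"
    using K zz s1 h by (intro mult_mono) auto
  finally show ?thesis unfolding \<psi>_def by (simp add: power2_eq_square algebra_simps)
qed

lemma barrier_s:
  fixes K A B \<epsilon> s :: real and y y' y'' :: "real \<Rightarrow> real"
  assumes K: "\<forall>x\<in>{0..1}. \<bar>E (x, y0 x)\<bar> \<le> K" and A: "A = K / m"
    and B: "\<bar>y0 0\<bar> \<le> B" "\<bar>y0 1\<bar> \<le> B" and eps: "\<epsilon> > 0"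
    and yc: "continuous_on {0..1} y" and y0': "y 0 = 0" and y1: "y 1 = 0"
    and yd: "\<forall>x\<in>{0<..<1}. (y has_real_derivative y' x) (at x) \<and> (y' has_real_derivative y'' x) (at x)
                               \<and> \<epsilon>\<^sup>2 * y'' x = f x (y x)"
    and s: "s = 1 \<or> s = -1"
    and x: "x \<in> {0..1}"
  shows "s * (y x - y0 x) \<le> A * \<epsilon>\<^sup>2 + B * (exp (- (sqrt m / \<epsilon>) * x) + exp (- (sqrt m / \<epsilon>) * (1 - x)))"
proof (rule ccontr)
  define c where "c = sqrt m / \<epsilon>"
  have c2: "c\<^sup>2 * \<epsilon>\<^sup>2 = m" using m eps by (simp add: c_def power_divide)
  define \<phi> where "\<phi> = (\<lambda>x. A * \<epsilon>\<^sup>2 + B * (exp (- c * x) + exp (- c * (1 - x))))"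
  define \<phi>1 where "\<phi>1 = (\<lambda>x. B * (- c * exp (- c * x) + c * exp (- c * (1 - x))))"
  define \<phi>2 where "\<phi>2 = (\<lambda>x. B * (c\<^sup>2 * exp (- c * x) + c\<^sup>2 * exp (- c * (1 - x))))"
  have d\<phi>: "(\<phi> has_real_derivative \<phi>1 t) (at t)" for t
    unfolding \<phi>_def \<phi>1_def by (auto intro!: derivative_eq_intros simp: algebra_simps)
  have d\<phi>1: "(\<phi>1 has_real_derivative \<phi>2 t) (at t)" for t
    unfolding \<phi>1_def \<phi>2_def by (auto intro!: derivative_eq_intros simp: algebra_simps power2_eq_square)
  have K0: "K \<ge> 0" using K[rule_format, of 0] by auto
  have A0: "A \<ge> 0" using K0 m A by simp
  have B0: "B \<ge> 0" using B by linarith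
  have \<phi>0: "\<phi> t \<ge> 0" for t using A0 B0 unfolding \<phi>_def by (simp add: add_nonneg_nonneg)
  have s1: "\<bar>s\<bar> = 1" using s by auto
  define w where "w = (\<lambda>x. s * (y x - y0 x) - \<phi> x)"
  assume "\<not> ?thesis"
  then have wx: "w x > 0" unfolding w_def \<phi>_def c_def by simp
  have cw: "continuous_on {0..1} w" unfolding w_def \<phi>_def
    by (intro continuous_intros yc y0_cont)
  obtain xm where xm: "xm \<in> {0..1}" "\<And>t. t \<in> {0..1} \<Longrightarrow> w t \<le> w xm"
    using continuous_attains_sup[OF compact_Icc _ cw] by auto
  have wxm: "w xm > 0" using xm(2)[OF x] wx by simp
  have "w 0 \<le> 0"
  proof -
    have "s * (y 0 - y0 0) \<le> B" using s B y0' by auto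
    moreover have "B \<le> \<phi> 0" using A0 B0 unfolding \<phi>_def
      by (simp add: add_nonneg_nonneg mult_nonneg_nonneg ring_distribs)
    ultimately show ?thesis unfolding w_def by simp
  qed
  moreover have "w 1 \<le> 0"
  proof -
    have "s * (y 1 - y0 1) \<le> B" using s B y1 by auto
    moreover have "B \<le> \<phi> 1" using A0 B0 unfolding \<phi>_def
      by (simp add: add_nonneg_nonneg mult_nonneg_nonneg ring_distribs)
    ultimately show ?thesis unfolding w_def by simp
  qed
  ultimately have xm01: "xm \<in> {0<..<1}" using xm(1) wxm by (cases "xm = 0"; cases "xm = 1") auto
  define w1 where "w1 = (\<lambda>t. s * (y' t - D1 t) - \<phi>1 t)"
  define w2 where "w2 = s * (y'' xm - E (xm, y0 xm)) - \<phi>2 xm"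
  have "w2 \<le> 0"
  proof (rule max2[of 0 xm 1 w w1])
    show "0 < xm" "xm < 1" using xm01 by auto
    show "(w has_real_derivative w1 t) (at t)" if "t \<in> {0<..<1}" for t
      unfolding w_def w1_def using yd that y0_deriv'[OF that] d\<phi>[of t]
      by (auto intro!: derivative_eq_intros)
    show "(w1 has_real_derivative w2) (at xm)"
      unfolding w1_def w2_def using yd xm01 D1_deriv[OF xm01] d\<phi>1[of xm]
      by (auto intro!: derivative_eq_intros)
    show "w t \<le> w xm" if "t \<in> {0<..<1}" for t using xm(2) that by auto
  qed
  define z where "z = y xm - y0 xm"
  have sz: "s * z > \<phi> xm" using wxm unfolding w_def z_def by simp
  have xmc: "xm \<in> {0..1}" using xm01 by auto
  have fz: "s * f xm (y xm) \<ge> m * (s * z)"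
  proof (cases "s = 1")
    case True
    then have "y0 xm \<le> y xm" using sz \<phi>0[of xm] unfolding z_def by simp
    from mono1[OF xmc this] y0_root[OF xmc] True show ?thesis unfolding z_def by simp
  next
    case False
    then have sm: "s = -1" using s by simp
    then have "y xm \<le> y0 xm" using sz \<phi>0[of xm] unfolding z_def by simp
    from mono1[OF xmc this] y0_root[OF xmc] sm show ?thesis unfolding z_def by (simp add: algebra_simps)
  qed
  have eq: "\<epsilon>\<^sup>2 * y'' xm = f xm (y xm)" using yd xm01 by auto
  have e1: "\<epsilon>\<^sup>2 * w2 = s * f xm (y xm) - s * \<epsilon>\<^sup>2 * E (xm, y0 xm) - \<epsilon>\<^sup>2 * \<phi>2 xm"
    unfolding w2_def using eq by (simp add: algebra_simps)
  have e2: "\<epsilon>\<^sup>2 * \<phi>2 xm = m * B * (exp (- c * xm) + exp (- c * (1 - xm)))"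
  proof -
    have "\<epsilon>\<^sup>2 * \<phi>2 xm = B * (c\<^sup>2 * \<epsilon>\<^sup>2) * (exp (- c * xm) + exp (- c * (1 - xm)))"
      unfolding \<phi>2_def by (simp add: algebra_simps)
    then show ?thesis using c2 by (simp only:) (simp add: algebra_simps)
  qed
  have e3: "s * \<epsilon>\<^sup>2 * E (xm, y0 xm) \<le> \<epsilon>\<^sup>2 * K"
  proof -
    have "s * \<epsilon>\<^sup>2 * E (xm, y0 xm) \<le> \<bar>s * \<epsilon>\<^sup>2 * E (xm, y0 xm)\<bar>" by simp
    also have "\<dots> = \<epsilon>\<^sup>2 * \<bar>E (xm, y0 xm)\<bar>" using s1 by (simp add: abs_mult)
    also have "\<dots> \<le> \<epsilon>\<^sup>2 * K" using K xmc by (intro mult_left_mono) auto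
    finally show ?thesis .
  qed
  have "\<epsilon>\<^sup>2 * w2 \<ge> m * (s * z) - \<epsilon>\<^sup>2 * K - m * B * (exp (- c * xm) + exp (- c * (1 - xm)))"
    using fz e1 e2 e3 by linarith
  moreover have "m * (s * z) > m * \<phi> xm" using sz m by simp
  moreover have "m * \<phi> xm = K * \<epsilon>\<^sup>2 + m * B * (exp (- c * xm) + exp (- c * (1 - xm)))"
    unfolding \<phi>_def A using m by (simp add: algebra_simps)
  ultimately have "\<epsilon>\<^sup>2 * w2 > 0" by (simp add: algebra_simps)
  moreover have "\<epsilon>\<^sup>2 * w2 \<le> 0" using \<open>w2 \<le> 0\<close> by (simp add: mult_nonneg_nonpos)
  ultimately show False by simp
qed

lemma barrier:
  fixes K A B \<epsilon> :: real and y y' y'' :: "real \<Rightarrow> real"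
  assumes K: "\<forall>x\<in>{0..1}. \<bar>E (x, y0 x)\<bar> \<le> K" and A: "A = K / m"
    and B: "\<bar>y0 0\<bar> \<le> B" "\<bar>y0 1\<bar> \<le> B" and eps: "\<epsilon> > 0"
    and yc: "continuous_on {0..1} y" and y0': "y 0 = 0" and y1: "y 1 = 0"
    and yd: "\<forall>x\<in>{0<..<1}. (y has_real_derivative y' x) (at x) \<and> (y' has_real_derivative y'' x) (at x)
                               \<and> \<epsilon>\<^sup>2 * y'' x = f x (y x)"
    and x: "x \<in> {0..1}"
  shows "\<bar>y x - y0 x\<bar> \<le> A * \<epsilon>\<^sup>2 + B * (exp (- (sqrt m / \<epsilon>) * x) + exp (- (sqrt m / \<epsilon>) * (1 - x)))"
  using barrier_s[OF K A B eps yc y0' y1 yd _ x, of 1] barrier_s[OF K A B eps yc y0' y1 yd _ x, of "-1"]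
  by (simp add: abs_le_iff)

lemma main_bound:
  assumes C0: "C\<^sub>0 > 0"
  shows "\<exists>C>0. \<forall>\<epsilon> (N::nat) y y' y''.
     \<epsilon> > 0 \<and> N > 0 \<and> 4 dvd N \<and>
     shishkin_lambda m \<epsilon> N = 2 * \<epsilon> * ln (real N) / sqrt m \<and>
     \<epsilon> \<le> C\<^sub>0 / real N \<and>
     continuous_on {0..1} y \<and> y 0 = 0 \<and> y 1 = 0 \<and>
     (\<forall>x\<in>{0<..<1}. (y has_real_derivative y' x) (at x) \<and>
                     (y' has_real_derivative y'' x) (at x) \<and>
                     \<epsilon>\<^sup>2 * y'' x = f x (y x))
     \<longrightarrow> (\<forall>i. let x = shishkin_mesh (shishkin_lambda m \<epsilon> N) N in
            N div 4 \<le> i \<and> i \<le> N div 2 - 1 \<and>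
            x (i - 1) \<in> {x (N div 4)..1/2} \<and> x i \<in> {x (N div 4)..1/2} \<and>
            x (i + 1) \<in> {x (N div 4)..1/2}
            \<longrightarrow> \<bar>G_op x N \<epsilon> \<gamma> f (\<lambda>j. y (x j)) i\<bar> \<le> C / (real N)\<^sup>2)"
proof -
  obtain K where K: "K > 0" "\<forall>x\<in>{0..1}. \<bar>E (x, y0 x)\<bar> \<le> K" using E_bound by blast
  define B where "B = \<bar>y0 0\<bar> + \<bar>y0 1\<bar>"
  define A where "A = K / m"
  define M where "M = A * C\<^sub>0\<^sup>2 + 2 * B"
  define s0 where "s0 = sqrt \<gamma> / C\<^sub>0"
  define Q0 where "Q0 = 1 + 2 / (cosh s0 - 1)"
  define C where "C = \<gamma> * Q0 * (8 * K + 4 * M) + 4 * \<gamma> * M + 1"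
  have g: "\<gamma> > 0" by (rule gamma_pos)
  have s0: "s0 > 0" using g C0 by (simp add: s0_def)
  have chs0: "cosh s0 > 1" using s0 cosh_real_ge_1[of s0] cosh_real_one_iff[of s0] by linarith
  have Q0: "Q0 > 0" using chs0 by (simp add: Q0_def add_pos_nonneg)
  have A0: "A \<ge> 0" using K m by (simp add: A_def)
  have B0: "B \<ge> 0" by (simp add: B_def)
  have M0: "M \<ge> 0" using A0 B0 by (simp add: M_def)
  have C: "C > 0" using g Q0 K M0 unfolding C_def
    by (intro add_nonneg_pos add_nonneg_nonneg mult_nonneg_nonneg) auto
  show ?thesis
  proof (intro exI[of _ C] conjI allI impI C)
    fix \<epsilon> :: real and N :: nat and y y' y'' :: "real \<Rightarrow> real" and i :: nat
    assume H: "\<epsilon> > 0 \<and> N > 0 \<and> 4 dvd N \<and>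
     shishkin_lambda m \<epsilon> N = 2 * \<epsilon> * ln (real N) / sqrt m \<and>
     \<epsilon> \<le> C\<^sub>0 / real N \<and>
     continuous_on {0..1} y \<and> y 0 = 0 \<and> y 1 = 0 \<and>
     (\<forall>x\<in>{0<..<1}. (y has_real_derivative y' x) (at x) \<and>
                     (y' has_real_derivative y'' x) (at x) \<and>
                     \<epsilon>\<^sup>2 * y'' x = f x (y x))"
    then have eps: "\<epsilon> > 0" and N0: "N > 0" and N4: "4 dvd N"
      and lam_eq: "shishkin_lambda m \<epsilon> N = 2 * \<epsilon> * ln (real N) / sqrt m"
      and epsN: "\<epsilon> \<le> C\<^sub>0 / real N" and yc: "continuous_on {0..1} y" and ya: "y 0 = 0" and yb: "y 1 = 0"
      and yd: "\<forall>x\<in>{0<..<1}. (y has_real_derivative y' x) (at x) \<and>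
                     (y' has_real_derivative y'' x) (at x) \<and> \<epsilon>\<^sup>2 * y'' x = f x (y x)"
      by auto
    define lam where "lam = shishkin_lambda m \<epsilon> N"
    define x where "x = shishkin_mesh lam N"
    have "N div 4 \<le> i \<and> i \<le> N div 2 - 1 \<and>
            x (i - 1) \<in> {x (N div 4)..1/2} \<and> x i \<in> {x (N div 4)..1/2} \<and>
            x (i + 1) \<in> {x (N div 4)..1/2}
            \<longrightarrow> \<bar>G_op x N \<epsilon> \<gamma> f (\<lambda>j. y (x j)) i\<bar> \<le> C / (real N)\<^sup>2"
    proof (intro impI)
      assume I: "N div 4 \<le> i \<and> i \<le> N div 2 - 1 \<and>
            x (i - 1) \<in> {x (N div 4)..1/2} \<and> x i \<in> {x (N div 4)..1/2} \<and>
            x (i + 1) \<in> {x (N div 4)..1/2}"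
      have i1: "N div 4 \<le> i" and i2: "i \<le> N div 2 - 1" and xim: "x (i - 1) \<ge> x (N div 4)" "x (i - 1) \<le> 1/2"
        and xi: "x i \<ge> x (N div 4)" "x i \<le> 1/2" and xip: "x (i + 1) \<ge> x (N div 4)" "x (i + 1) \<le> 1/2"
        using I by auto
      obtain q where q: "N = 4 * q" using N4 by blast
      have q1: "q \<ge> 1" using N0 q by simp
      have Nd4: "N div 4 = q" using q by simp
      have Nd2: "N div 2 = 2 * q" using q by simp
      have rN: "real N = 4 * real q" using q by simp
      have lnN: "ln (real N) > 0" using q1 rN by simp
      have lam_def': "lam = 2 * \<epsilon> * ln (real N) / sqrt m" using lam_eq by (simp add: lam_def)
      have lam0: "lam > 0" unfolding lam_def' using eps lnN m by simp
      have lam4: "lam \<le> 1/4" unfolding lam_def shishkin_lambda_def by simp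
      define Hh where "Hh = 2 * (1 - 2 * lam) / real N"
      have xq: "x q = lam" unfolding x_def shishkin_mesh_def using q q1 by (simp add: rN)
      have xmid: "x j = lam + Hh * (real j - real q)" if "q \<le> j" "j \<le> 2 * q" for j
      proof (cases "4 * j \<le> N")
        case True
        then have "j = q" using that q by simp
        then show ?thesis using xq by simp
      next
        case False
        then have "\<not> 4 * j \<le> N" "4 * j \<le> 3 * N" using that q by auto
        then show ?thesis unfolding x_def shishkin_mesh_def Hh_def using rN q1
          by (simp add: field_simps)
      qed
      have iq: "i \<ge> q + 1"
      proof (rule ccontr)
        assume "\<not> i \<ge> q + 1"
        then have iq: "i = q" using i1 Nd4 by simp
        have "x (i - 1) = 4 * lam * real (q - 1) / real N"
          unfolding x_def shishkin_mesh_def using iq q by simp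
        also have "\<dots> = lam - lam / real q" using q1 rN by (simp add: of_nat_diff field_simps)
        also have "\<dots> < lam" using lam0 q1 by simp
        finally show False using xim(1) Nd4 xq by simp
      qed
      have ip: "i + 1 \<le> 2 * q" using i2 Nd2 iq by simp
      have xm1: "x (i - 1) = x i - Hh"
      proof -
        have a: "x (i - 1) = lam + Hh * (real (i - 1) - real q)" by (rule xmid) (use iq ip in auto)
        have b: "x i = lam + Hh * (real i - real q)" by (rule xmid) (use iq ip in auto)
        have "real (i - 1) = real i - 1" using iq by (simp add: of_nat_diff)
        then show ?thesis using a b by (simp add: algebra_simps)
      qed
      have xp1: "x (i + 1) = x i + Hh" using xmid[of "i + 1"] xmid[of i] iq ip by (simp add: algebra_simps)
      have ml1: "mesh_len x i = Hh" using xm1 by (simp add: mesh_len_def)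
      have ml2: "mesh_len x (i + 1) = Hh" using xp1 by (simp add: mesh_len_def)
      have i0: "i \<noteq> 0" using iq by simp
      have iN: "i \<noteq> N" using ip q q1 by simp
      have H1: "Hh \<ge> 1 / real N" unfolding Hh_def using lam4 N0 by (simp add: divide_right_mono)
      have H2: "Hh \<le> 2 / real N" unfolding Hh_def using lam0 N0 by (simp add: divide_right_mono)
      have Hp: "Hh > 0" using H1 N0 by (smt (verit) divide_pos_pos of_nat_0_less_iff)
      define \<beta> where "\<beta> = sqrt \<gamma> / \<epsilon>"
      define \<sigma> where "\<sigma> = \<beta> * Hh"
      have bp: "\<beta> > 0" using g eps by (simp add: \<beta>_def)
      have sp: "\<sigma> > 0" using bp Hp by (simp add: \<sigma>_def)
      define v where "v = (\<lambda>j. y (x j))"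
      define fv where "fv = (\<lambda>j. f (x j) (v j))"
      define Q where "Q = (1 + cosh \<sigma>) / (cosh \<sigma> - 1)"
      have Geq: "G_op x N \<epsilon> \<gamma> f v i = \<gamma> * Q * (v (i - 1) - 2 * v i + v (i + 1)) - (fv (i - 1) + 2 * fv i + fv (i + 1))"
      proof -
        have "G_op x N \<epsilon> \<gamma> f v i = \<gamma> / ((\<beta> / tanh \<sigma> - \<beta> / sinh \<sigma>) + (\<beta> / tanh \<sigma> - \<beta> / sinh \<sigma>)) *
           ((3 * (\<beta> / sinh \<sigma>) + \<beta> / tanh \<sigma> + (\<beta> / tanh \<sigma> - \<beta> / sinh \<sigma>)) * (v (i - 1) - v i)
            - (3 * (\<beta> / sinh \<sigma>) + \<beta> / tanh \<sigma> + (\<beta> / tanh \<sigma> - \<beta> / sinh \<sigma>)) * (v i - v (i + 1))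
            - (fv (i - 1) + 2 * fv i + fv (i + 1)) / \<gamma> * ((\<beta> / tanh \<sigma> - \<beta> / sinh \<sigma>) + (\<beta> / tanh \<sigma> - \<beta> / sinh \<sigma>)))"
          unfolding G_op_def Let_def coef_Dd_def coef_d_def coef_a_def ml1 ml2 \<sigma>_def \<beta>_def fv_def
          using i0 iN by simp
        also have "\<dots> = \<gamma> * Q * (v (i - 1) - 2 * v i + v (i + 1)) - (fv (i - 1) + 2 * fv i + fv (i + 1))"
          unfolding Q_def by (rule G_alg[OF bp sp g])
        finally show ?thesis .
      qed
      have chs: "cosh \<sigma> > 1" using sp cosh_real_ge_1[of \<sigma>] cosh_real_one_iff[of \<sigma>] by linarith
      have ss0: "\<sigma> \<ge> s0"
      proof -
        have "C\<^sub>0 * (1 / real N) \<le> C\<^sub>0 * Hh" using H1 C0 by (intro mult_left_mono) auto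
        then have "\<epsilon> \<le> C\<^sub>0 * Hh" using epsN by simp
        then have "sqrt \<gamma> * \<epsilon> \<le> sqrt \<gamma> * (C\<^sub>0 * Hh)" using g by (simp add: mult_left_mono)
        then show ?thesis unfolding \<sigma>_def \<beta>_def s0_def using eps C0 by (simp add: field_simps)
      qed
      have QQ0: "Q \<le> Q0"
      proof -
        have "cosh s0 \<le> cosh \<sigma>" using ss0 s0 by (simp add: cosh_real_nonneg_le_iff)
        then have "2 / (cosh \<sigma> - 1) \<le> 2 / (cosh s0 - 1)" using chs0 by (simp add: frac_le)
        moreover have "Q = 1 + 2 / (cosh \<sigma> - 1)"
        proof -
          have ne: "cosh \<sigma> - 1 \<noteq> 0" using chs sp by simp
          have "(1 + cosh \<sigma>) = (cosh \<sigma> - 1) + 2" by simp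
          then have "(1 + cosh \<sigma>) / (cosh \<sigma> - 1) = (cosh \<sigma> - 1) / (cosh \<sigma> - 1) + 2 / (cosh \<sigma> - 1)"
            by (metis add_divide_distrib)
          then show ?thesis using ne by (simp add: Q_def)
        qed
        ultimately show ?thesis by (simp add: Q0_def)
      qed
      have Q1: "Q \<ge> 0" using chs by (simp add: Q_def)
      have Nsq: "(real N)\<^sup>2 > 0" using N0 by simp
      have zb: "\<bar>y t - y0 t\<bar> \<le> M / (real N)\<^sup>2" if "lam \<le> t" "t \<le> 1/2" for t
      proof -
        have t01: "t \<in> {0..1}" using that lam0 by auto
        define c where "c = sqrt m / \<epsilon>"
        have c0: "c > 0" using m eps by (simp add: c_def)
        have clam: "c * lam = 2 * ln (real N)" unfolding c_def lam_def' using m eps by simp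
        have e1: "exp (- c * t) \<le> 1 / (real N)\<^sup>2"
        proof -
          have "exp (- c * t) \<le> exp (- (c * lam))" using that c0 by (simp add: mult_left_mono)
          then show ?thesis using clam exp_ln2[OF N0] by simp
        qed
        have e2: "exp (- c * (1 - t)) \<le> 1 / (real N)\<^sup>2"
        proof -
          have "exp (- c * (1 - t)) \<le> exp (- (c * lam))" using that c0 lam4 by (simp add: mult_left_mono)
          then show ?thesis using clam exp_ln2[OF N0] by simp
        qed
        have e3: "\<epsilon>\<^sup>2 \<le> C\<^sub>0\<^sup>2 / (real N)\<^sup>2"
        proof -
          have "\<epsilon>\<^sup>2 \<le> (C\<^sub>0 / real N)\<^sup>2" using epsN eps by (intro power_mono) auto
          then show ?thesis by (simp add: power_divide)
        qed
        have "\<bar>y t - y0 t\<bar> \<le> A * \<epsilon>\<^sup>2 + B * (exp (- c * t) + exp (- c * (1 - t)))"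
          using barrier[OF K(2) A_def _ _ eps yc ya yb yd t01, of B] unfolding c_def B_def by simp
        also have "\<dots> \<le> A * (C\<^sub>0\<^sup>2 / (real N)\<^sup>2) + B * (1 / (real N)\<^sup>2 + 1 / (real N)\<^sup>2)"
          using e1 e2 e3 A0 B0 by (intro add_mono mult_left_mono) auto
        also have "\<dots> = M / (real N)\<^sup>2" by (simp add: M_def add_divide_distrib)
        finally show ?thesis .
      qed
      have fb: "\<bar>f t (y t)\<bar> \<le> \<gamma> * (M / (real N)\<^sup>2)" if "lam \<le> t" "t \<le> 1/2" for t
      proof -
        have t01: "t \<in> {0..1}" using that lam0 by auto
        have "\<bar>f t (y t)\<bar> = \<bar>f t (y t) - f t (y0 t)\<bar>" using y0_root[OF t01] by simp
        also have "\<dots> \<le> \<gamma> * \<bar>y t - y0 t\<bar>" by (rule mono_abs(2)[OF t01])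
        also have "\<dots> \<le> \<gamma> * (M / (real N)\<^sup>2)" using zb[OF that] g by (intro mult_left_mono) auto
        finally show ?thesis .
      qed
      have xs: "lam \<le> x (i - 1)" "x (i - 1) \<le> 1/2" "lam \<le> x i" "x i \<le> 1/2" "lam \<le> x (i + 1)" "x (i + 1) \<le> 1/2"
        using xim xi xip Nd4 xq by auto
      have sd: "\<bar>y0 (x i - Hh) - 2 * y0 (x i) + y0 (x i + Hh)\<bar> \<le> 2 * K * Hh\<^sup>2"
        by (rule sec_diff[OF K(2) Hp]) (use xs xm1 xp1 lam0 in auto)
      have "2 * K * Hh\<^sup>2 \<le> 2 * K * (2 / real N)\<^sup>2" using H2 Hp K by (intro mult_left_mono power_mono) auto
      then have sd2: "\<bar>y0 (x (i - 1)) - 2 * y0 (x i) + y0 (x (i + 1))\<bar> \<le> 8 * K / (real N)\<^sup>2"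
        using sd xm1 xp1 by (simp add: power_divide)
      have zd: "\<bar>v (i - 1) - 2 * v i + v (i + 1)\<bar> \<le> (8 * K + 4 * M) / (real N)\<^sup>2"
      proof -
        have "\<bar>v (i - 1) - 2 * v i + v (i + 1)\<bar> \<le> \<bar>y0 (x (i - 1)) - 2 * y0 (x i) + y0 (x (i + 1))\<bar>
           + \<bar>y (x (i - 1)) - y0 (x (i - 1))\<bar> + 2 * \<bar>y (x i) - y0 (x i)\<bar> + \<bar>y (x (i + 1)) - y0 (x (i + 1))\<bar>"
          unfolding v_def by (rule abs4)
        also have "\<dots> \<le> 8 * K / (real N)\<^sup>2 + M / (real N)\<^sup>2 + 2 * (M / (real N)\<^sup>2) + M / (real N)\<^sup>2"
          using sd2 zb[OF xs(1,2)] zb[OF xs(3,4)] zb[OF xs(5,6)] by linarith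
        also have "\<dots> = (8 * K + 4 * M) / (real N)\<^sup>2" by (simp add: add_divide_distrib)
        finally show ?thesis .
      qed
      have fs: "\<bar>fv (i - 1) + 2 * fv i + fv (i + 1)\<bar> \<le> 4 * \<gamma> * M / (real N)\<^sup>2"
      proof -
        have "\<bar>fv (i - 1) + 2 * fv i + fv (i + 1)\<bar> \<le> \<bar>fv (i - 1)\<bar> + 2 * \<bar>fv i\<bar> + \<bar>fv (i + 1)\<bar>" by (rule abs3)
        also have "\<dots> \<le> \<gamma> * (M / (real N)\<^sup>2) + 2 * (\<gamma> * (M / (real N)\<^sup>2)) + \<gamma> * (M / (real N)\<^sup>2)"
          unfolding fv_def v_def using fb[OF xs(1,2)] fb[OF xs(3,4)] fb[OF xs(5,6)] by linarith
        also have "\<dots> = 4 * \<gamma> * M / (real N)\<^sup>2" by (simp add: add_divide_distrib)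
        finally show ?thesis .
      qed
      have "\<bar>G_op x N \<epsilon> \<gamma> f v i\<bar> \<le> \<gamma> * Q * \<bar>v (i - 1) - 2 * v i + v (i + 1)\<bar> + \<bar>fv (i - 1) + 2 * fv i + fv (i + 1)\<bar>"
        unfolding Geq using g Q1 by (intro absG) auto
      also have "\<dots> \<le> \<gamma> * Q0 * ((8 * K + 4 * M) / (real N)\<^sup>2) + 4 * \<gamma> * M / (real N)\<^sup>2"
        using zd fs g Q1 QQ0 by (intro add_mono mult_mono) auto
      also have "\<dots> \<le> C / (real N)\<^sup>2" unfolding C_def using Nsq by (simp add: field_simps)
      finally show "\<bar>G_op x N \<epsilon> \<gamma> f (\<lambda>j. y (x j)) i\<bar> \<le> C / (real N)\<^sup>2" unfolding v_def .
    qed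
    then show "let x = shishkin_mesh (shishkin_lambda m \<epsilon> N) N in
            N div 4 \<le> i \<and> i \<le> N div 2 - 1 \<and>
            x (i - 1) \<in> {x (N div 4)..1/2} \<and> x i \<in> {x (N div 4)..1/2} \<and>
            x (i + 1) \<in> {x (N div 4)..1/2}
            \<longrightarrow> \<bar>G_op x N \<epsilon> \<gamma> f (\<lambda>j. y (x j)) i\<bar> \<le> C / (real N)\<^sup>2"
      unfolding Let_def x_def lam_def .
  qed
qed

end

theorem lemma3:
  fixes f :: "real \<Rightarrow> real \<Rightarrow> real" and fy :: "real \<Rightarrow> real \<Rightarrow> real"
    and k :: nat and m \<gamma> C\<^sub>0 :: real
  assumes k: "k \<ge> 2"
    and f_Ck: "Ck_on k ({0..1} \<times> UNIV) (\<lambda>p. f (fst p) (snd p))"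
    and fy: "\<And>x v. x \<in> {0..1} \<Longrightarrow> ((\<lambda>w. f x w) has_real_derivative fy x v) (at v)"
    and m: "m > 0" and fy_ge: "\<And>x v. x \<in> {0..1} \<Longrightarrow> fy x v \<ge> m"
    and gamma: "\<And>x v. x \<in> {0..1} \<Longrightarrow> \<gamma> \<ge> fy x v"
    and C0: "C\<^sub>0 > 0"
  shows "\<exists>C>0. \<forall>\<epsilon> (N::nat) y y' y''.
     \<epsilon> > 0 \<and> N > 0 \<and> 4 dvd N \<and>
     shishkin_lambda m \<epsilon> N = 2 * \<epsilon> * ln (real N) / sqrt m \<and>
     \<epsilon> \<le> C\<^sub>0 / real N \<and>
     continuous_on {0..1} y \<and> y 0 = 0 \<and> y 1 = 0 \<and>
     (\<forall>x\<in>{0<..<1}. (y has_real_derivative y' x) (at x) \<and>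
                     (y' has_real_derivative y'' x) (at x) \<and>
                     \<epsilon>\<^sup>2 * y'' x = f x (y x))
     \<longrightarrow> (\<forall>i. let x = shishkin_mesh (shishkin_lambda m \<epsilon> N) N in
            N div 4 \<le> i \<and> i \<le> N div 2 - 1 \<and>
            x (i - 1) \<in> {x (N div 4)..1/2} \<and> x i \<in> {x (N div 4)..1/2} \<and>
            x (i + 1) \<in> {x (N div 4)..1/2}
            \<longrightarrow> \<bar>G_op x N \<epsilon> \<gamma> f (\<lambda>j. y (x j)) i\<bar> \<le> C / (real N)\<^sup>2)"
proof -
  have "Ck_on 2 ({0..1} \<times> UNIV) (\<lambda>p. f (fst p) (snd p))" using Ck_le[OF f_Ck k] .
  then obtain gx gy gxx gxy gyx gyy where
    d1: "\<forall>p\<in>{0..1} \<times> UNIV. ((\<lambda>p. f (fst p) (snd p)) has_derivative (\<lambda>(h1, h2). gx p * h1 + gy p * h2)) (at p within {0..1} \<times> UNIV)"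
    and d2: "\<forall>p\<in>{0..1} \<times> UNIV. (gx has_derivative (\<lambda>(h1, h2). gxx p * h1 + gxy p * h2)) (at p within {0..1} \<times> UNIV)"
    and d3: "\<forall>p\<in>{0..1} \<times> UNIV. (gy has_derivative (\<lambda>(h1, h2). gyx p * h1 + gyy p * h2)) (at p within {0..1} \<times> UNIV)"
    and c1: "continuous_on ({0..1} \<times> UNIV) gxx" and c2: "continuous_on ({0..1} \<times> UNIV) gxy"
    and c3: "continuous_on ({0..1} \<times> UNIV) gyx" and c4: "continuous_on ({0..1} \<times> UNIV) gyy"
    by (rule Ck2)
  interpret setting f fy m \<gamma> gx gy gxx gxy gyx gyy
  proof
    show "\<And>p. p \<in> {0..1} \<times> UNIV \<Longrightarrow> ((\<lambda>p. f (fst p) (snd p)) has_derivative (\<lambda>(h1, h2). gx p * h1 + gy p * h2)) (at p within {0..1} \<times> UNIV)"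
      using d1 by blast
    show "\<And>p. p \<in> {0..1} \<times> UNIV \<Longrightarrow> (gx has_derivative (\<lambda>(h1, h2). gxx p * h1 + gxy p * h2)) (at p within {0..1} \<times> UNIV)"
      using d2 by blast
    show "\<And>p. p \<in> {0..1} \<times> UNIV \<Longrightarrow> (gy has_derivative (\<lambda>(h1, h2). gyx p * h1 + gyy p * h2)) (at p within {0..1} \<times> UNIV)"
      using d3 by blast
  qed (use c1 c2 c3 c4 fy m fy_ge gamma in auto)
  show ?thesis by (rule main_bound[OF C0])
qed

end
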